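(* Let $\mathbbm{k}$ be an algebraically closed field of characteristic $0$, and let $\mathscr{A}_2$ be the connected cochain DG algebra whose underlying graded algebra is the free algebra $\mathbbm{k}\langle y_1,y_2,y_3\rangle$ with $|y_1|=|y_2|=|y_3|=1$, and whose differential is determined by $\partial(y_1)=y_3^2$, $\partial(y_2)=y_1y_3+y_3y_1$, $\partial(y_3)=0$ (extended by the graded Leibniz rule). Then $$H(\mathscr{A}_2)=\frac{\mathbbm{k}[\lceil y_3\rceil,\lceil y_1^2+y_2y_3+y_3y_2\rceil]}{(\lceil y_3\rceil^2 )},$$ i.e. the cohomology ring is the commutative algebra generated by $\lceil y_3\rceil$ (degree $1$) and $\lceil y_1^2+y_2y_3+y_3y_2\rceil$ (degree $2$) subject only to $\lceil y_3\rceil^2=0$.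
   Context: A cochain DG algebra is a $\mathbb{Z}$-graded algebra with a degree $1$ differential $\partial$ satisfying $\partial^2=0$ and $\partial(ab)=\partial(a)b+(-1)^{|a|}a\partial(b)$. For a cocycle $z$, $\lceil z\rceil$ denotes its cohomology class. *)

theory Defs
  imports "HOL-Computational_Algebra.Polynomial"
begin

text \<open>The free graded algebra k<y1,y2,y3> with all generators of degree 1.
  Elements are finitely supported functions from words over the generators to k.\<close>

datatype gen = Y1 | Y2 | Y3

type_synonym 'a fa = "gen list \<Rightarrow> 'a"

definition fa_carrier :: "'a::zero fa set" where
  "fa_carrier = {f. finite {w. f w \<noteq> 0}}"

definition fa_zero :: "'a::zero fa" where
  "fa_zero = (\<lambda>w. 0)"

definition fa_add :: "'a::plus fa \<Rightarrow> 'a fa \<Rightarrow> 'a fa" where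
  "fa_add f g = (\<lambda>w. f w + g w)"

definition fa_diff :: "'a::minus fa \<Rightarrow> 'a fa \<Rightarrow> 'a fa" where
  "fa_diff f g = (\<lambda>w. f w - g w)"

definition fa_smul :: "'a::times \<Rightarrow> 'a fa \<Rightarrow> 'a fa" where
  "fa_smul c f = (\<lambda>w. c * f w)"

definition word :: "gen list \<Rightarrow> 'a::{zero,one} fa" where
  "word u = (\<lambda>w. if w = u then 1 else 0)"

definition fa_mult :: "'a::comm_ring_1 fa \<Rightarrow> 'a fa \<Rightarrow> 'a fa" (infixl "\<odot>" 70) where
  "f \<odot> g = (\<lambda>w. \<Sum>i\<le>length w. f (take i w) * g (drop i w))"

definition fa_one :: "'a::comm_ring_1 fa" where
  "fa_one = word []"

definition fa_pow :: "'a::comm_ring_1 fa \<Rightarrow> nat \<Rightarrow> 'a fa" where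
  "fa_pow f n = ((\<lambda>g. f \<odot> g) ^^ n) fa_one"

definition y1 :: "'a::comm_ring_1 fa" where "y1 = word [Y1]"
definition y2 :: "'a::comm_ring_1 fa" where "y2 = word [Y2]"
definition y3 :: "'a::comm_ring_1 fa" where "y3 = word [Y3]"

fun dgen :: "gen \<Rightarrow> 'a::comm_ring_1 fa" where
  "dgen Y1 = y3 \<odot> y3"
| "dgen Y2 = fa_add (y1 \<odot> y3) (y3 \<odot> y1)"
| "dgen Y3 = fa_zero"

text \<open>Extension to words by the graded Leibniz rule (generators have degree 1):
  d(x w) = d(x) w + (-1)^1 x d(w).\<close>
fun dword :: "gen list \<Rightarrow> 'a::comm_ring_1 fa" where
  "dword [] = fa_zero"
| "dword (x # w) = fa_diff (dgen x \<odot> word w) (word [x] \<odot> dword w)"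

definition dfa :: "'a::comm_ring_1 fa \<Rightarrow> 'a fa" where
  "dfa f = (\<lambda>v. \<Sum>u\<in>{u. f u \<noteq> 0}. f u * dword u v)"

definition cocycles :: "'a::comm_ring_1 fa set" where
  "cocycles = {f \<in> fa_carrier. dfa f = fa_zero}"

definition coboundaries :: "'a::comm_ring_1 fa set" where
  "coboundaries = {dfa g | g. g \<in> fa_carrier}"

definition zz :: "'a::comm_ring_1 fa" where
  "zz = fa_add (fa_add (y1 \<odot> y1) (y2 \<odot> y3)) (y3 \<odot> y2)"

text \<open>k[a,b] is modelled as ('a poly) poly: polynomials in b with coefficients in k[a].\<close>
definition ev :: "'a::comm_ring_1 poly poly \<Rightarrow> 'a fa" where
  "ev P = (\<lambda>v. \<Sum>j\<le>degree P. \<Sum>i\<le>degree (coeff P j).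
              coeff (coeff P j) i * (fa_pow y3 i \<odot> fa_pow zz j) v)"

end

theory Submission
  imports Defs "HOL-Library.Function_Algebras"
begin


lemma fa_mult_Nil: "(f \<odot> g) [] = f [] * g []"
  by (simp add: fa_mult_def)

lemma fa_mult_Cons: "(f \<odot> g) (a # w) = f [] * g (a # w) + ((\<lambda>u. f (a # u)) \<odot> g) w"
  unfolding fa_mult_def length_Cons by (subst sum.atMost_Suc_shift) simp

lemma fa_mult_add_left: "(f + g) \<odot> h = f \<odot> h + g \<odot> h"
  by (rule ext) (simp add: fa_mult_def sum.distrib algebra_simps)
lemma fa_mult_add_right: "h \<odot> (f + g) = h \<odot> f + h \<odot> g"
  by (rule ext) (simp add: fa_mult_def sum.distrib algebra_simps)
lemma fa_mult_diff_left: "(f - g) \<odot> h = f \<odot> h - g \<odot> h"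
  by (rule ext) (simp add: fa_mult_def sum_subtractf algebra_simps)
lemma fa_mult_diff_right: "h \<odot> (f - g) = h \<odot> f - h \<odot> g"
  by (rule ext) (simp add: fa_mult_def sum_subtractf algebra_simps)
lemma fa_mult_zero_left[simp]: "0 \<odot> h = 0"
  by (rule ext) (simp add: fa_mult_def)
lemma fa_mult_zero_right[simp]: "h \<odot> 0 = 0"
  by (rule ext) (simp add: fa_mult_def)
lemma fa_mult_zero_left'[simp]: "(\<lambda>u. 0) \<odot> h = 0"
  by (rule ext) (simp add: fa_mult_def)
lemma fa_mult_zero_right'[simp]: "h \<odot> (\<lambda>u. 0) = 0"
  by (rule ext) (simp add: fa_mult_def)
lemma fa_mult_smul_left: "fa_smul c f \<odot> h = fa_smul c (f \<odot> h)"
  by (rule ext) (simp add: fa_mult_def fa_smul_def sum_distrib_left algebra_simps)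
lemma fa_mult_smul_right: "h \<odot> fa_smul c f = fa_smul c (h \<odot> f)"
  by (rule ext) (simp add: fa_mult_def fa_smul_def sum_distrib_left algebra_simps)
lemma fa_mult_uminus_left: "(- f) \<odot> h = - (f \<odot> h)"
  by (rule ext) (simp add: fa_mult_def sum_negf)
lemma fa_mult_uminus_right: "h \<odot> (- f) = - (h \<odot> f)"
  by (rule ext) (simp add: fa_mult_def sum_negf)

lemma fa_mult_assoc_pt: "((f \<odot> g) \<odot> h) w = (f \<odot> (g \<odot> h)) w"
proof (induction w arbitrary: f)
  case Nil
  then show ?case by (simp add: fa_mult_Nil)
next
  case (Cons a w)
  have e: "(\<lambda>u. (f \<odot> g) (a # u)) = fa_smul (f []) (\<lambda>u. g (a # u)) + ((\<lambda>u. f (a # u)) \<odot> g)"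
    by (rule ext) (simp add: fa_mult_Cons fa_smul_def)
  have "((f \<odot> g) \<odot> h) (a # w) = (f \<odot> g) [] * h (a # w) + ((\<lambda>u. (f \<odot> g) (a # u)) \<odot> h) w"
    by (rule fa_mult_Cons)
  also have "\<dots> = (f \<odot> g) [] * h (a # w) + (fa_smul (f []) (\<lambda>u. g (a # u)) \<odot> h) w
        + (((\<lambda>u. f (a # u)) \<odot> g) \<odot> h) w"
    unfolding e fa_mult_add_left by simp
  also have "\<dots> = (f \<odot> (g \<odot> h)) (a # w)"
    unfolding fa_mult_Cons[of f] fa_mult_Cons[of g] fa_mult_smul_left
    by (simp add: Cons.IH fa_mult_Nil fa_smul_def algebra_simps)
  finally show ?case .
qed

lemma fa_mult_assoc: "(f \<odot> g) \<odot> h = f \<odot> (g \<odot> h)"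
  by (rule ext) (rule fa_mult_assoc_pt)

lemma word_apply: "word u w = (if w = u then 1 else 0)"
  by (simp add: word_def)

lemma word_mult_word: "(word u \<odot> word v :: 'a::comm_ring_1 fa) = word (u @ v)"
proof (rule ext)
  fix w
  show "(word u \<odot> word v :: 'a fa) w = word (u @ v) w"
  proof (induction u arbitrary: w)
    case Nil
    then show ?case by (cases w) (simp_all add: fa_mult_Nil fa_mult_Cons word_apply)
  next
    case (Cons x u)
    show ?case
    proof (cases w)
      case Nil then show ?thesis by (simp add: fa_mult_Nil word_apply)
    next
      case (Cons a w')
      have "(\<lambda>t. word (x # u) (a # t) :: 'a) = (if a = x then word u else 0)"
        by (rule ext) (simp add: word_apply)
      then have "(word (x # u) \<odot> word v :: 'a fa) w = (if a = x then (word u \<odot> word v) w' else 0)"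
        using \<open>w = a # w'\<close> by (simp add: fa_mult_Cons word_apply[of "x#u" "[]"])
      also have "\<dots> = word ((x # u) @ v) w"
        using Cons.IH[of w'] \<open>w = a # w'\<close> by (auto simp add: word_apply[of "x # u @ v"] word_apply[of "u @ v"])
      finally show ?thesis .
    qed
  qed
qed

lemma word_one_left[simp]: "word [] \<odot> f = f"
  by (rule ext, case_tac x) (simp_all add: fa_mult_Nil fa_mult_Cons word_apply)
lemma word_one_right[simp]: "f \<odot> word [] = f"
proof (rule ext)
  fix w show "(f \<odot> word []) w = f w"
    by (induction w arbitrary: f) (simp_all add: fa_mult_Nil fa_mult_Cons word_apply)
qed



fun mrg :: "gen \<Rightarrow> gen \<Rightarrow> gen option" where
  "mrg Y3 Y3 = Some Y1" | "mrg Y1 Y3 = Some Y2" | "mrg Y3 Y1 = Some Y2" | "mrg _ _ = None"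

definition mt :: "gen \<Rightarrow> gen \<Rightarrow> (gen \<Rightarrow> 'a::zero) \<Rightarrow> 'a" where
  "mt a b F = (case mrg a b of None \<Rightarrow> 0 | Some g \<Rightarrow> F g)"

fun Dr :: "'a::comm_ring_1 fa \<Rightarrow> 'a fa" where
  "Dr f [] = 0"
| "Dr f [a] = 0"
| "Dr f (a # b # w) = mt a b (\<lambda>g. f (g # w)) - Dr (\<lambda>u. f (a # u)) (b # w)"

lemma cases_list012[case_names Nil Single CC]:
  "(v = [] \<Longrightarrow> P) \<Longrightarrow> (\<And>a. v = [a] \<Longrightarrow> P) \<Longrightarrow> (\<And>a b w. v = a # b # w \<Longrightarrow> P) \<Longrightarrow> P"
  by (metis list.exhaust)

lemma fa_add_eq: "fa_add f g = f + g" by (simp add: fa_add_def plus_fun_def)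
lemma fa_diff_eq: "fa_diff f g = f - g" by (simp add: fa_diff_def fun_diff_def)
lemma fa_zero_eq: "fa_zero = 0" by (simp add: fa_zero_def zero_fun_def)

lemma mt_add: "mt a b (\<lambda>g. F g + G g) = mt a b F + (mt a b G :: 'a::comm_ring_1)"
  by (simp add: mt_def split: option.split)
lemma mt_smul: "mt a b (\<lambda>g. c * F g) = c * (mt a b F :: 'a::comm_ring_1)"
  by (simp add: mt_def split: option.split)
lemma mt_zero[simp]: "mt a b (\<lambda>g. 0) = (0 :: 'a::comm_ring_1)"
  by (simp add: mt_def split: option.split)

lemma Dr_add_pt: "Dr (\<lambda>w. f w + g w) v = Dr f v + Dr g v"
  by (induction v arbitrary: f g rule: induct_list012) (simp_all add: mt_add)
lemma Dr_smul_pt: "Dr (\<lambda>w. c * f w) v = c * Dr f v"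
  by (induction v arbitrary: f rule: induct_list012) (simp_all add: mt_smul algebra_simps)
lemma Dr_zero_pt[simp]: "Dr (\<lambda>w. 0) v = 0"
  by (induction v rule: induct_list012) simp_all

lemma Dr_zero[simp]: "Dr 0 = 0"
  by (rule ext) (simp add: zero_fun_def)
lemma Dr_add: "Dr (f + g) = Dr f + Dr g"
  by (rule ext) (simp add: plus_fun_def Dr_add_pt)
lemma Dr_smul: "Dr (fa_smul c f) = fa_smul c (Dr f)"
  by (rule ext) (simp add: fa_smul_def Dr_smul_pt)
lemma Dr_uminus: "Dr (- f) = - Dr f"
  using Dr_smul[of "-1" f] by (simp add: fa_smul_def fun_Compl_def)
lemma Dr_diff: "Dr (f - g) = Dr f - Dr g"
  using Dr_add[of f "- g"] Dr_uminus[of g] by (simp add: fun_diff_def plus_fun_def fun_Compl_def)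

lemma Dr_lincomb: "finite S \<Longrightarrow> Dr (\<lambda>w. \<Sum>u\<in>S. c u * F u w) v = (\<Sum>u\<in>S. c u * Dr (F u) v)"
proof (induction S rule: finite_induct)
  case empty
  then show ?case by simp
next
  case (insert x S)
  then show ?case by (simp add: Dr_add_pt Dr_smul_pt)
qed

lemma wx_Nil[simp]: "(word [x] \<odot> g) [] = 0"
  by (simp add: fa_mult_Nil word_apply)
lemma wx_Cons[simp]: "(word [x] \<odot> g) (a # w) = (if a = x then g w else 0)"
proof -
  have "(\<lambda>u. word [x] (a # u)) = (if a = x then word [] else 0)"
    by (rule ext) (simp add: word_apply)
  have "(word [x] \<odot> g) (a # w) = word [x] [] * g (a # w) + ((\<lambda>u. word [x] (a # u)) \<odot> g) w"
    by (rule fa_mult_Cons)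
  also have "\<dots> = (if a = x then g w else 0)"
    unfolding \<open>(\<lambda>u. word [x] (a # u)) = _\<close> by (simp add: word_apply)
  finally show ?thesis .
qed

lemma y_defs: "y1 = word [Y1]" "y2 = word [Y2]" "y3 = word [Y3]"
  by (simp_all add: y1_def y2_def y3_def)

lemma dgen_mult_Nil[simp]: "(dgen x \<odot> g) [] = 0"
  by (cases x) (simp_all add: fa_mult_assoc fa_mult_add_left y_defs fa_add_eq fa_zero_eq)
lemma dgen_mult_single[simp]: "(dgen x \<odot> g) [a] = 0"
  by (cases x) (simp_all add: fa_mult_assoc fa_mult_add_left y_defs fa_add_eq fa_zero_eq)
lemma dgen_mult_CC[simp]: "(dgen x \<odot> g) (a # b # w) = mt a b (\<lambda>h. if h = x then 1 else 0) * g w"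
  by (cases x; cases a; cases b) (simp_all add: fa_mult_assoc fa_mult_add_left y_defs fa_add_eq fa_zero_eq mt_def)

lemma L1: "Dr (word [x] \<odot> g) = dgen x \<odot> g - word [x] \<odot> Dr g"
proof (rule ext)
  fix v
  show "Dr (word [x] \<odot> g) v = (dgen x \<odot> g - word [x] \<odot> Dr g) v"
  proof (cases v rule: cases_list012)
    case (CC a b w)
    have e: "(\<lambda>u. (word [x] \<odot> g) (a # u)) = (if a = x then g else 0)"
      by (rule ext) simp
    show ?thesis unfolding CC
      by (simp add: e mt_def split: option.split)
  qed simp_all
qed

lemma Dr_word_Nil[simp]: "Dr (word []) = 0"
proof (rule ext)
  fix v show "Dr (word []) v = 0 v"
  proof (cases v rule: cases_list012)
    case (CC a b w)
    have e: "(\<lambda>u. word [] (a # u)) = (\<lambda>u. 0)" by (rule ext) (simp add: word_apply)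
    show ?thesis unfolding CC by (simp add: e word_apply)
  qed simp_all
qed

lemma word_Cons: "word (x # u) = word [x] \<odot> word u"
  by (simp add: word_mult_word)

lemma Dr_word: "Dr (word u) = dword u"
proof (induction u)
  case Nil
  then show ?case by (simp add: fa_zero_def zero_fun_def)
next
  case (Cons x u)
  then show ?case by (simp add: word_Cons[of x u] L1 fa_diff_def fun_diff_def)
qed



definition fin :: "'a::comm_ring_1 fa \<Rightarrow> bool" where
  "fin f \<longleftrightarrow> (\<exists>n. \<forall>w. n \<le> length w \<longrightarrow> f w = 0)"

definition hom :: "nat \<Rightarrow> 'a::comm_ring_1 fa \<Rightarrow> bool" where
  "hom n f \<longleftrightarrow> (\<forall>w. f w \<noteq> 0 \<longrightarrow> length w = n)"

definition sg :: "'a::comm_ring_1 fa \<Rightarrow> 'a fa" where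
  "sg f = (\<lambda>w. (-1) ^ length w * f w)"

lemma UNIV_gen: "(UNIV :: gen set) = {Y1, Y2, Y3}"
  using gen.exhaust by auto

lemma finite_U: "finite {u :: gen list. length u < n}"
proof -
  have "finite {xs. set xs \<subseteq> (UNIV :: gen set) \<and> length xs \<le> n}"
    by (rule finite_lists_length_le) (simp add: UNIV_gen)
  then show ?thesis by (rule finite_subset[rotated]) auto
qed

lemma fin_carrier: "f \<in> fa_carrier \<longleftrightarrow> fin f"
proof
  assume "f \<in> fa_carrier"
  then have "finite (length ` {w. f w \<noteq> 0})" by (simp add: fa_carrier_def)
  then obtain n where "\<forall>x \<in> length ` {w. f w \<noteq> 0}. x < n"
    using finite_nat_set_iff_bounded by blast
  then show "fin f" unfolding fin_def by (metis (mono_tags) image_eqI leD mem_Collect_eq)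
next
  assume "fin f"
  then obtain n where n: "\<forall>w. n \<le> length w \<longrightarrow> f w = 0" by (auto simp: fin_def)
  have "{w. f w \<noteq> 0} \<subseteq> {u. length u < n}" using n by (auto simp: not_le[symmetric])
  then show "f \<in> fa_carrier" unfolding fa_carrier_def using finite_U finite_subset by blast
qed

lemma expand:
  fixes f :: "'a::comm_ring_1 fa"
  assumes "\<forall>w. n \<le> length w \<longrightarrow> f w = 0"
  shows "f = (\<lambda>w. \<Sum>u\<in>{u. length u < n}. f u * word u w)"
proof (rule ext)
  fix w
  have "(\<Sum>u\<in>{u. length u < n}. f u * word u w) = (\<Sum>u\<in>{u. length u < n}. if w = u then f w else 0)"
    by (rule sum.cong) (auto simp: word_apply)
  also have "\<dots> = (if w \<in> {u. length u < n} then f w else 0)"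
    by (rule sum.delta') (rule finite_U)
  also have "\<dots> = f w" using assms by auto
  finally show "f w = (\<Sum>u\<in>{u. length u < n}. f u * word u w)" by simp
qed

lemma fa_mult_lincomb_left:
  "(\<lambda>w. \<Sum>u\<in>S. c u * F u w) \<odot> g = (\<lambda>w. \<Sum>u\<in>S. c u * (F u \<odot> g) w)"
proof (rule ext)
  fix w
  show "((\<lambda>w. \<Sum>u\<in>S. c u * F u w) \<odot> g) w = (\<Sum>u\<in>S. c u * (F u \<odot> g) w)"
    unfolding fa_mult_def sum_distrib_right sum_distrib_left mult.assoc
    by (rule sum.swap)
qed

lemma Dr_word_mult:
  "Dr (word u \<odot> g) = Dr (word u) \<odot> g + fa_smul ((-1) ^ length u) (word u \<odot> Dr g)"
proof (induction u arbitrary: g)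
  case Nil
  then show ?case by (simp add: fa_smul_def)
next
  case (Cons x u)
  have "Dr (word (x # u) \<odot> g) = dgen x \<odot> (word u \<odot> g) - word [x] \<odot> Dr (word u \<odot> g)"
    by (simp add: word_Cons[of x u] fa_mult_assoc L1)
  also have "\<dots> = dgen x \<odot> (word u \<odot> g) - word [x] \<odot> (Dr (word u) \<odot> g)
       - fa_smul ((-1) ^ length u) (word (x # u) \<odot> Dr g)"
  proof -
    have "word [x] \<odot> Dr (word u \<odot> g) = word [x] \<odot> (Dr (word u) \<odot> g) + fa_smul ((-1)^length u) (word (x#u) \<odot> Dr g)"
      unfolding Cons.IH fa_mult_add_right fa_mult_smul_right word_Cons[of x u] fa_mult_assoc ..
    then show ?thesis by (simp add: diff_diff_eq)
  qed
  also have "\<dots> = Dr (word (x # u)) \<odot> g + fa_smul ((-1) ^ length (x # u)) (word (x # u) \<odot> Dr g)"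
    by (rule ext) (simp add: word_Cons[of x u] L1 fa_mult_diff_left fa_mult_assoc fa_smul_def)
  finally show ?case .
qed

lemma sg_expand:
  fixes f :: "'a::comm_ring_1 fa"
  assumes "\<forall>w. n \<le> length w \<longrightarrow> f w = 0"
  shows "sg f = (\<lambda>w. \<Sum>u\<in>{u. length u < n}. (f u * (-1) ^ length u) * word u w)"
proof (rule ext)
  fix w
  have "(\<Sum>u\<in>{u. length u < n}. (f u * (-1) ^ length u) * word u w)
     = (\<Sum>u\<in>{u. length u < n}. if w = u then (f w * (-1) ^ length w) else 0)"
    by (rule sum.cong) (auto simp: word_apply)
  also have "\<dots> = (if w \<in> {u. length u < n} then f w * (-1) ^ length w else 0)"
    by (rule sum.delta') (rule finite_U)
  also have "\<dots> = sg f w" using assms by (auto simp: sg_def)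
  finally show "sg f w = (\<Sum>u\<in>{u. length u < n}. (f u * (-1) ^ length u) * word u w)" by simp
qed

lemma Dr_expand:
  fixes f :: "'a::comm_ring_1 fa"
  assumes "\<forall>w. n \<le> length w \<longrightarrow> f w = 0"
  shows "Dr f = (\<lambda>v. \<Sum>u\<in>{u. length u < n}. f u * Dr (word u) v)"
proof (rule ext)
  fix v
  have "Dr f v = Dr (\<lambda>w. \<Sum>u\<in>{u. length u < n}. f u * word u w) v"
    using expand[OF assms] by metis
  also have "\<dots> = (\<Sum>u\<in>{u. length u < n}. f u * Dr (word u) v)"
    by (rule Dr_lincomb[OF finite_U])
  finally show "Dr f v = (\<Sum>u\<in>{u. length u < n}. f u * Dr (word u) v)" .
qed

lemma LEIB:
  assumes "fin f"
  shows "Dr (f \<odot> g) = Dr f \<odot> g + sg f \<odot> Dr g"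
proof -
  obtain n where n: "\<forall>w. n \<le> length w \<longrightarrow> f w = 0" using assms by (auto simp: fin_def)
  let ?U = "{u :: gen list. length u < n}"
  have "f \<odot> g = (\<lambda>w. \<Sum>u\<in>?U. f u * word u w) \<odot> g"
    using expand[OF n] by metis
  also have "\<dots> = (\<lambda>w. \<Sum>u\<in>?U. f u * (word u \<odot> g) w)"
    by (rule fa_mult_lincomb_left)
  finally have fg: "f \<odot> g = (\<lambda>w. \<Sum>u\<in>?U. f u * (word u \<odot> g) w)" .
  show ?thesis
  proof (rule ext)
    fix v
    have "Dr (f \<odot> g) v = (\<Sum>u\<in>?U. f u * Dr (word u \<odot> g) v)"
      unfolding fg by (rule Dr_lincomb[OF finite_U])
    also have "\<dots> = (\<Sum>u\<in>?U. f u * (Dr (word u) \<odot> g) v)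
        + (\<Sum>u\<in>?U. (f u * (-1) ^ length u) * (word u \<odot> Dr g) v)"
      by (simp add: Dr_word_mult fa_smul_def sum.distrib algebra_simps)
    also have "\<dots> = (Dr f \<odot> g) v + (sg f \<odot> Dr g) v"
      unfolding Dr_expand[OF n] sg_expand[OF n] fa_mult_lincomb_left by simp
    finally show "Dr (f \<odot> g) v = (Dr f \<odot> g + sg f \<odot> Dr g) v" by simp
  qed
qed



lemma fin_zero[simp]: "fin 0" by (simp add: fin_def)
lemma fin_word[simp]: "fin (word u)"
  unfolding fin_def by (rule exI[of _ "Suc (length u)"]) (auto simp: word_apply)
lemma fin_add[simp]: "fin f \<Longrightarrow> fin g \<Longrightarrow> fin (f + g)"
proof -
  assume "fin f" "fin g"
  then obtain n m where n: "\<forall>w. n \<le> length w \<longrightarrow> f w = 0" and m: "\<forall>w. m \<le> length w \<longrightarrow> g w = 0"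
    by (auto simp: fin_def)
  have "\<forall>w. n + m \<le> length w \<longrightarrow> (f + g) w = 0"
  proof (intro allI impI)
    fix w :: "gen list" assume "n + m \<le> length w"
    then have "n \<le> length w" "m \<le> length w" by auto
    then show "(f + g) w = 0" using n m by simp
  qed
  then show ?thesis unfolding fin_def by blast
qed
lemma fin_smul[simp]: "fin f \<Longrightarrow> fin (fa_smul c f)"
  unfolding fin_def fa_smul_def by (elim exE, rule_tac x=n in exI, simp)
lemma fin_uminus[simp]: "fin f \<Longrightarrow> fin (- f)"
  unfolding fin_def by (elim exE, rule_tac x=n in exI, simp)
lemma fin_diff[simp]: "fin f \<Longrightarrow> fin g \<Longrightarrow> fin (f - g)"
  using fin_add[of f "- g"] fin_uminus[of g] by (simp add: fun_diff_def plus_fun_def fun_Compl_def)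
lemma fin_sg[simp]: "fin f \<Longrightarrow> fin (sg f)"
  unfolding fin_def sg_def by (elim exE, rule_tac x=n in exI, simp)
lemma fin_mult[simp]:
  assumes "fin f" "fin g" shows "fin (f \<odot> g)"
proof -
  obtain n where n: "\<forall>w. n \<le> length w \<longrightarrow> f w = 0" using assms by (auto simp: fin_def)
  obtain m where m: "\<forall>w. m \<le> length w \<longrightarrow> g w = 0" using assms by (auto simp: fin_def)
  have "\<forall>w. n + m \<le> length w \<longrightarrow> (f \<odot> g) w = 0"
  proof (intro allI impI)
    fix w :: "gen list" assume w: "n + m \<le> length w"
    have "\<forall>i\<in>{..length w}. f (take i w) * g (drop i w) = 0"
    proof
      fix i assume "i \<in> {..length w}"
      show "f (take i w) * g (drop i w) = 0"
      proof (cases "n \<le> i")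
        case True then show ?thesis using n w by simp
      next
        case False then show ?thesis using m w by simp
      qed
    qed
    then show "(f \<odot> g) w = 0" unfolding fa_mult_def by simp
  qed
  then show ?thesis unfolding fin_def by blast
qed


lemma Dr_vanish: "\<forall>u. n \<le> length u \<longrightarrow> f u = 0 \<Longrightarrow> Suc n \<le> length v \<Longrightarrow> Dr f v = 0"
proof (induction v arbitrary: f n rule: induct_list012)
  case (3 a b w)
  have "mt a b (\<lambda>g. f (g # w)) = 0"
    using 3(3,4) by (simp add: mt_def split: option.split)
  moreover have "Dr (\<lambda>u. f (a # u)) (b # w) = 0"
    using 3(2)[of "n - 1" "\<lambda>u. f (a # u)"] 3(3,4) by simp
  ultimately show ?case by simp
qed simp_all

lemma fin_Dr[simp]: "fin f \<Longrightarrow> fin (Dr f)"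
proof -
  assume "fin f"
  then obtain n where n: "\<forall>w. n \<le> length w \<longrightarrow> f w = 0" by (auto simp: fin_def)
  have "\<forall>v. Suc n \<le> length v \<longrightarrow> Dr f v = 0" using Dr_vanish[OF n] by blast
  then show ?thesis unfolding fin_def by blast
qed

lemma fin_sum: "finite S \<Longrightarrow> (\<And>x. x \<in> S \<Longrightarrow> fin (F x)) \<Longrightarrow> fin (\<lambda>w. \<Sum>x\<in>S. F x w)"
proof (induction S rule: finite_induct)
  case empty then show ?case by (simp add: zero_fun_def[symmetric])
next
  case (insert x S)
  have "(\<lambda>w. \<Sum>x\<in>insert x S. F x w) = F x + (\<lambda>w. \<Sum>x\<in>S. F x w)"
    using insert by (simp add: plus_fun_def)
  then show ?case using insert by simp
qed

lemma hom_fin: "hom n f \<Longrightarrow> fin f"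
proof -
  assume "hom n f"
  then have "\<forall>w. Suc n \<le> length w \<longrightarrow> f w = 0" unfolding hom_def by fastforce
  then show ?thesis unfolding fin_def by blast
qed
lemma hom_word: "hom (length u) (word u)"
  unfolding hom_def by (simp add: word_apply)
lemma hom_add: "hom n f \<Longrightarrow> hom n g \<Longrightarrow> hom n (f + g)"
  unfolding hom_def by (metis add.right_neutral plus_fun_apply)
lemma hom_smul: "hom n f \<Longrightarrow> hom n (fa_smul c f)"
  unfolding hom_def fa_smul_def by (metis mult_zero_right)
lemma hom_zero: "hom n 0"
  unfolding hom_def by simp
lemma hom_mult: "hom n f \<Longrightarrow> hom m g \<Longrightarrow> hom (n + m) (f \<odot> g)"
proof -
  assume f: "hom n f" and g: "hom m g"
  show ?thesis unfolding hom_def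
  proof (intro allI impI)
    fix w :: "gen list" assume "(f \<odot> g) w \<noteq> 0"
    then obtain i where "f (take i w) * g (drop i w) \<noteq> 0" "i \<le> length w"
      unfolding fa_mult_def by (meson atMost_iff sum.not_neutral_contains_not_neutral)
    then have "f (take i w) \<noteq> 0" "g (drop i w) \<noteq> 0" by auto
    then have "length (take i w) = n" "length (drop i w) = m" using f g unfolding hom_def by blast+
    then show "length w = n + m" by simp
  qed
qed
lemma sg_hom: "hom n f \<Longrightarrow> sg f = fa_smul ((-1) ^ n) f"
proof (rule ext)
  fix w assume "hom n f"
  then show "sg f w = fa_smul ((-1) ^ n) f w"
    unfolding hom_def sg_def fa_smul_def by (cases "f w = 0") auto
qed



lemma dfa_eq:
  fixes f :: "'a::comm_ring_1 fa"
  assumes "f \<in> fa_carrier" shows "dfa f = Dr f"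
proof (rule ext)
  fix v
  let ?S = "{u. f u \<noteq> 0}"
  have fS: "finite ?S" using assms by (simp add: fa_carrier_def)
  have fe: "f = (\<lambda>w. \<Sum>u\<in>?S. f u * word u w)"
  proof (rule ext)
    fix w
    have "(\<Sum>u\<in>?S. f u * word u w) = (\<Sum>u\<in>?S. if w = u then f w else 0)"
      by (rule sum.cong) (auto simp: word_apply)
    also have "\<dots> = (if w \<in> ?S then f w else 0)" by (rule sum.delta'[OF fS])
    also have "\<dots> = f w" by auto
    finally show "f w = (\<Sum>u\<in>?S. f u * word u w)" by simp
  qed
  have "Dr f v = Dr (\<lambda>w. \<Sum>u\<in>?S. f u * word u w) v" using fe by metis
  also have "\<dots> = (\<Sum>u\<in>?S. f u * Dr (word u) v)" by (rule Dr_lincomb[OF fS])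
  also have "\<dots> = dfa f v" by (simp add: dfa_def Dr_word)
  finally show "dfa f v = Dr f v" by simp
qed

lemma fin_y[simp]: "fin y1" "fin y2" "fin y3"
  by (simp_all add: y_defs)
lemma hom_y: "hom 1 y1" "hom 1 y2" "hom 1 y3"
  using hom_word[of "[Y1]"] hom_word[of "[Y2]"] hom_word[of "[Y3]"] by (simp_all add: y_defs)

lemma Dr_y3[simp]: "Dr y3 = 0"
  by (simp add: y_defs Dr_word fa_diff_eq fa_zero_eq)
lemma Dr_y1: "Dr y1 = y3 \<odot> y3"
  by (simp add: y1_def Dr_word fa_diff_eq fa_zero_eq)
lemma Dr_y2: "Dr y2 = y1 \<odot> y3 + y3 \<odot> y1"
  by (simp add: y2_def Dr_word fa_diff_eq fa_zero_eq fa_add_eq)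

lemma sg_y: "sg y1 = - y1" "sg y2 = - y2" "sg y3 = - y3"
  by (simp_all add: sg_hom[OF hom_y(1)] sg_hom[OF hom_y(2)] sg_hom[OF hom_y(3)] fa_smul_def fun_Compl_def)

lemma smul_m1: "fa_smul (-1) (f :: 'a::comm_ring_1 fa) = - f"
  by (simp add: fa_smul_def fun_Compl_def)

lemma Dr_dgen: "Dr (dgen x) = 0"
proof (cases x)
  case Y1 then show ?thesis by (simp add: LEIB)
next
  case Y2 then show ?thesis
    by (simp add: LEIB fa_add_eq Dr_add Dr_y1 sg_y fa_mult_uminus_left fa_mult_assoc)
next
  case Y3 then show ?thesis by (simp add: fa_zero_eq)
qed

lemma hom_dgen: "hom 2 (dgen x)"
proof (cases x)
  case Y1 then show ?thesis using hom_mult[OF hom_y(3) hom_y(3)] by (simp add: numeral_2_eq_2)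
next
  case Y2 then show ?thesis
    using hom_add[OF hom_mult[OF hom_y(1) hom_y(3)] hom_mult[OF hom_y(3) hom_y(1)]] by (simp add: fa_add_eq numeral_2_eq_2)
next
  case Y3 then show ?thesis by (simp add: fa_zero_eq hom_zero)
qed

lemma DD_word: "Dr (Dr (word u :: 'a::comm_ring_1 fa)) = 0"
proof (induction u)
  case Nil then show ?case by simp
next
  case (Cons x u)
  have fd: "fin (dgen x :: 'a fa)" by (rule hom_fin[OF hom_dgen])
  have e: "Dr (word (x # u) :: 'a fa) = dgen x \<odot> word u - word [x] \<odot> Dr (word u)"
    by (simp add: word_Cons[of x u] L1)
  have "Dr (Dr (word (x # u) :: 'a fa)) = Dr (dgen x \<odot> word u) - Dr (word [x] \<odot> Dr (word u))"
    by (subst e) (rule Dr_diff)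
  also have "\<dots> = 0"
    unfolding LEIB[OF fd] L1 Cons.IH Dr_dgen sg_hom[OF hom_dgen] by (simp add: fa_smul_def Cons.IH)
  finally show ?case .
qed

lemma DD:
  fixes f :: "'a::comm_ring_1 fa"
  assumes "fin f" shows "Dr (Dr f) = 0"
proof -
  obtain n where n: "\<forall>w. n \<le> length w \<longrightarrow> f w = 0" using assms by (auto simp: fin_def)
  show ?thesis
  proof (rule ext)
    fix v
    have "Dr (Dr f) v = (\<Sum>u\<in>{u. length u < n}. f u * Dr (Dr (word u)) v)"
      unfolding Dr_expand[OF n] by (rule Dr_lincomb[OF finite_U])
    then show "Dr (Dr f) v = 0 v" by (simp add: DD_word)
  qed
qed

lemma zz_eq: "zz = y1 \<odot> y1 + y2 \<odot> y3 + y3 \<odot> y2"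
  by (simp add: zz_def fa_add_eq)
lemma hom_zz: "hom 2 zz"
  unfolding zz_eq using hom_add[OF hom_add[OF hom_mult[OF hom_y(1) hom_y(1)] hom_mult[OF hom_y(2) hom_y(3)]] hom_mult[OF hom_y(3) hom_y(2)]]
  by (simp add: numeral_2_eq_2)
lemma fin_zz[simp]: "fin zz" by (rule hom_fin[OF hom_zz])
lemma sg_zz: "sg zz = zz" by (simp add: sg_hom[OF hom_zz] fa_smul_def)

lemma Dr_zz: "Dr zz = 0"
  unfolding zz_eq
  by (simp add: Dr_add Dr_word y_defs word_mult_word fa_diff_eq fa_zero_eq fa_add_eq fa_mult_add_left fa_mult_add_right fa_mult_diff_right fa_mult_diff_left)

lemma comm_zz_y3: "zz \<odot> y3 - y3 \<odot> zz = Dr (- (y1 \<odot> y2 + y2 \<odot> y1))"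
  unfolding zz_eq
  by (simp add: Dr_add Dr_uminus Dr_diff Dr_word y_defs word_mult_word fa_diff_eq fa_zero_eq fa_add_eq fa_mult_add_left fa_mult_add_right fa_mult_diff_right fa_mult_diff_left)



abbreviation Yp :: "nat \<Rightarrow> 'a::comm_ring_1 fa" where "Yp n \<equiv> fa_pow y3 n"
abbreviation Zp :: "nat \<Rightarrow> 'a::comm_ring_1 fa" where "Zp n \<equiv> fa_pow zz n"
definition T :: "nat \<Rightarrow> nat \<Rightarrow> 'a::comm_ring_1 fa" where "T i j = Yp i \<odot> Zp j"

lemma fa_pow_0[simp]: "fa_pow f 0 = word []"
  by (simp add: fa_pow_def fa_one_def)
lemma fa_pow_Suc: "fa_pow f (Suc n) = f \<odot> fa_pow f n"
  by (simp add: fa_pow_def)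

lemma hom_pow: "hom k f \<Longrightarrow> hom (k * n) (fa_pow f n)"
proof (induction n)
  case 0 then show ?case using hom_word[of "[]"] by simp
next
  case (Suc n) then show ?case using hom_mult[of k f "k * n" "fa_pow f n"] by (simp add: fa_pow_Suc)
qed

lemma fin_pow[simp]: "fin f \<Longrightarrow> fin (fa_pow f n)"
  by (induction n) (simp_all add: fa_pow_Suc)

lemma Dr_pow: "fin f \<Longrightarrow> Dr f = 0 \<Longrightarrow> Dr (fa_pow f n) = 0"
  by (induction n) (simp_all add: fa_pow_Suc LEIB)

lemma pow_add: "fa_pow f (m + n) = fa_pow f m \<odot> fa_pow f n"
  by (induction m) (simp_all add: fa_pow_Suc fa_mult_assoc)

lemma hom_Yp: "hom n (Yp n)" using hom_pow[OF hom_y(3), of n] by simp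
lemma hom_Zp: "hom (2 * n) (Zp n)" using hom_pow[OF hom_zz, of n] by simp
lemma Dr_Yp[simp]: "Dr (Yp n) = 0" by (rule Dr_pow) simp_all
lemma Dr_Zp[simp]: "Dr (Zp n) = 0" by (rule Dr_pow) (simp_all add: Dr_zz)
lemma fin_Yp[simp]: "fin (Yp n)" by simp
lemma fin_Zp[simp]: "fin (Zp n)" by simp

lemma hom_T: "hom (i + 2 * j) (T i j)"
  unfolding T_def by (rule hom_mult[OF hom_Yp hom_Zp])
lemma fin_T[simp]: "fin (T i j)" unfolding T_def by simp
lemma Dr_T[simp]: "Dr (T i j) = 0" unfolding T_def by (simp add: LEIB)

lemma ev_T: "ev P = (\<lambda>v. \<Sum>j\<le>degree P. \<Sum>i\<le>degree (coeff P j). coeff (coeff P j) i * T i j v)"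
  by (simp add: ev_def T_def)

lemma T_zero: "length v \<noteq> i + 2 * j \<Longrightarrow> T i j v = 0"
  using hom_T[of i j] unfolding hom_def by blast

lemma ev_len: "ev P v = (\<Sum>j\<le>length v. if 2 * j \<le> length v
      then coeff (coeff P j) (length v - 2 * j) * T (length v - 2 * j) j v else 0)"
proof -
  let ?n = "length v"
  define g where "g j = (if 2 * j \<le> ?n then coeff (coeff P j) (?n - 2 * j) * T (?n - 2 * j) j v else 0)" for j
  have inner: "(\<Sum>i\<le>degree (coeff P j). coeff (coeff P j) i * T i j v) = g j" for j
  proof -
    have "(\<Sum>i\<le>degree (coeff P j). coeff (coeff P j) i * T i j v)
        = (\<Sum>i\<le>degree (coeff P j). if ?n - 2 * j = i then (if 2 * j \<le> ?n then coeff (coeff P j) i * T i j v else 0) else 0)"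
      by (rule sum.cong) (auto simp: T_zero)
    also have "\<dots> = (if ?n - 2 * j \<in> {..degree (coeff P j)} then
        (if 2 * j \<le> ?n then coeff (coeff P j) (?n - 2 * j) * T (?n - 2 * j) j v else 0) else 0)"
      by (rule sum.delta') simp
    also have "\<dots> = g j" by (auto simp: g_def coeff_eq_0)
    finally show ?thesis .
  qed
  have "ev P v = (\<Sum>j\<le>degree P. g j)" by (simp add: ev_T inner)
  also have "\<dots> = (\<Sum>j\<le>max (degree P) ?n. g j)"
    by (rule sum.mono_neutral_left) (auto simp: g_def coeff_eq_0)
  also have "\<dots> = (\<Sum>j\<le>?n. g j)"
    by (rule sum.mono_neutral_right) (auto simp: g_def)
  finally show ?thesis by (simp add: g_def)
qed

lemma ev_add: "ev (P + Q) = ev P + ev Q"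
  by (rule ext) (simp add: ev_len sum.distrib[symmetric] algebra_simps if_distrib cong: if_cong)

lemma ev_zero[simp]: "ev 0 = 0"
  unfolding ev_def by (simp add: zero_fun_def)

lemma ev_monom: "ev (monom (monom c i) j) = fa_smul c (T i j)"
proof (rule ext)
  fix v :: "gen list"
  let ?n = "length v"
  have "ev (monom (monom c i) j) v = (\<Sum>j'\<le>?n. if j = j' then (if 2 * j \<le> ?n \<and> ?n - 2 * j = i then c * T i j v else 0) else 0)"
    unfolding ev_len by (rule sum.cong) (auto simp: coeff_monom)
  also have "\<dots> = (if 2 * j \<le> ?n \<and> ?n - 2 * j = i then c * T i j v else 0)"
    by (subst sum.delta') auto
  also have "\<dots> = fa_smul c (T i j) v"
    by (auto simp: fa_smul_def T_zero)
  finally show "ev (monom (monom c i) j) v = fa_smul c (T i j) v" .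
qed

lemma pp_induct:
  assumes z: "\<Phi> 0" and a: "\<And>P Q. \<Phi> P \<Longrightarrow> \<Phi> Q \<Longrightarrow> \<Phi> (P + Q)"
    and m: "\<And>c i j. \<Phi> (monom (monom c i) j)"
  shows "\<Phi> P"
proof -
  have s: "finite S \<Longrightarrow> (\<And>x. x \<in> S \<Longrightarrow> \<Phi> (F x)) \<Longrightarrow> \<Phi> (\<Sum>x\<in>S. F x)" for S :: "nat set" and F
    by (induction S rule: finite_induct) (auto intro: z a)
  have "P = (\<Sum>j\<le>degree P. monom (coeff P j) j)" by (simp add: poly_as_sum_of_monoms)
  also have "\<dots> = (\<Sum>j\<le>degree P. \<Sum>i\<le>degree (coeff P j). monom (monom (coeff (coeff P j) i) i) j)"
    by (rule sum.cong) (simp_all add: monom_sum[symmetric] poly_as_sum_of_monoms)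
  finally have e: "P = \<dots>" .
  show ?thesis by (subst e) (intro s m; simp)
qed

lemma fa_smul_zero[simp]: "fa_smul c (0 :: 'a::comm_ring_1 fa) = 0"
  by (simp add: fa_smul_def zero_fun_def)

lemma part1: "fin (ev P) \<and> Dr (ev P) = (0 :: 'a::comm_ring_1 fa)"
proof (rule pp_induct[where \<Phi>="\<lambda>P. fin (ev P) \<and> Dr (ev P) = (0 :: 'a fa)"])
  show "fin (ev 0) \<and> Dr (ev 0) = (0 :: 'a fa)" by simp
next
  fix P Q :: "'a poly poly"
  assume "fin (ev P) \<and> Dr (ev P) = 0" "fin (ev Q) \<and> Dr (ev Q) = 0"
  then show "fin (ev (P + Q)) \<and> Dr (ev (P + Q)) = 0" by (simp add: ev_add Dr_add)
next
  fix c :: 'a and i j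
  show "fin (ev (monom (monom c i) j)) \<and> Dr (ev (monom (monom c i) j)) = 0"
    by (simp add: ev_monom Dr_smul fa_smul_zero)
qed

lemma cob_iff: "x \<in> coboundaries \<longleftrightarrow> (\<exists>g. fin g \<and> x = Dr g)"
proof
  assume "x \<in> coboundaries"
  then obtain g where "g \<in> fa_carrier" "x = dfa g" unfolding coboundaries_def by blast
  then show "\<exists>g. fin g \<and> x = Dr g" by (auto simp: fin_carrier dfa_eq)
next
  assume "\<exists>g. fin g \<and> x = Dr g"
  then obtain g where "fin g" "x = Dr g" by blast
  then have "g \<in> fa_carrier" "x = dfa g" by (auto simp: fin_carrier dfa_eq)
  then show "x \<in> coboundaries" unfolding coboundaries_def by blast
qed

lemma cob_Dr: "fin g \<Longrightarrow> Dr g \<in> coboundaries"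
  unfolding cob_iff by blast
lemma cob_zero[simp]: "0 \<in> coboundaries"
  using cob_Dr[OF fin_zero] by simp
lemma cob_add: "x \<in> coboundaries \<Longrightarrow> y \<in> coboundaries \<Longrightarrow> x + y \<in> coboundaries"
proof -
  assume "x \<in> coboundaries" "y \<in> coboundaries"
  then obtain g h where "fin g" "x = Dr g" "fin h" "y = Dr h" unfolding cob_iff by blast
  then show ?thesis using cob_Dr[of "g + h"] by (simp add: Dr_add)
qed
lemma cob_smul: "x \<in> coboundaries \<Longrightarrow> fa_smul c x \<in> coboundaries"
proof -
  assume "x \<in> coboundaries"
  then obtain g where "fin g" "x = Dr g" unfolding cob_iff by blast
  then show ?thesis using cob_Dr[of "fa_smul c g"] by (simp add: Dr_smul)
qed
lemma cob_uminus: "x \<in> coboundaries \<Longrightarrow> - x \<in> coboundaries"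
proof -
  assume "x \<in> coboundaries"
  then obtain g where "fin g" "x = Dr g" unfolding cob_iff by blast
  then show ?thesis using cob_Dr[of "- g"] by (simp add: Dr_uminus)
qed
lemma cob_diff: "x \<in> coboundaries \<Longrightarrow> y \<in> coboundaries \<Longrightarrow> x - y \<in> coboundaries"
proof -
  assume "x \<in> coboundaries" "y \<in> coboundaries"
  then obtain g h where "fin g" "x = Dr g" "fin h" "y = Dr h" unfolding cob_iff by blast
  then show ?thesis using cob_Dr[of "g - h"] by (simp add: Dr_diff)
qed

lemma cob_mult_right: "x \<in> coboundaries \<Longrightarrow> fin X \<Longrightarrow> Dr X = 0 \<Longrightarrow> x \<odot> X \<in> coboundaries"
proof -
  assume "x \<in> coboundaries" "fin X" "Dr X = 0"
  then obtain g where g: "fin g" "x = Dr g" unfolding cob_iff by blast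
  then have "Dr (g \<odot> X) = x \<odot> X" using \<open>Dr X = 0\<close> by (simp add: LEIB)
  moreover have "fin (g \<odot> X)" using g \<open>fin X\<close> by simp
  ultimately show ?thesis using cob_Dr by metis
qed

lemma cob_mult_left: "x \<in> coboundaries \<Longrightarrow> hom n X \<Longrightarrow> Dr X = 0 \<Longrightarrow> X \<odot> x \<in> coboundaries"
proof -
  assume "x \<in> coboundaries" "hom n X" "Dr X = 0"
  then obtain g where g: "fin g" "x = Dr g" unfolding cob_iff by blast
  have fX: "fin X" by (rule hom_fin[OF \<open>hom n X\<close>])
  have "Dr (X \<odot> g) = fa_smul ((-1) ^ n) (X \<odot> x)"
    using \<open>Dr X = 0\<close> g by (simp add: LEIB[OF fX] sg_hom[OF \<open>hom n X\<close>] fa_mult_smul_left)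
  then have "fa_smul ((-1) ^ n) (Dr (X \<odot> g)) = X \<odot> x"
    by (simp add: fa_smul_def power_mult_distrib[symmetric])
  moreover have "fin (X \<odot> g)" using g fX by simp
  ultimately show ?thesis using cob_smul[OF cob_Dr] Dr_smul by metis
qed



lemma cob_zero'[simp]: "(\<lambda>a. 0) \<in> coboundaries"
  using cob_zero by (simp add: zero_fun_def)

lemma cob_Dr_zz_y3: "zz \<odot> y3 - y3 \<odot> zz \<in> (coboundaries :: 'a::comm_ring_1 fa set)"
  unfolding comm_zz_y3 by (rule cob_Dr) simp

lemma ZY1: "zz \<odot> Yp k - Yp k \<odot> zz \<in> (coboundaries :: 'a::comm_ring_1 fa set)"
proof (induction k)
  case 0 then show ?case by simp
next
  case (Suc k)
  have e: "zz \<odot> Yp (Suc k) - Yp (Suc k) \<odot> zz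
      = (zz \<odot> y3 - y3 \<odot> zz) \<odot> Yp k + y3 \<odot> (zz \<odot> Yp k - Yp k \<odot> (zz :: 'a fa))"
    by (simp add: fa_pow_Suc fa_mult_diff_left fa_mult_diff_right fa_mult_assoc)
  show ?case unfolding e
    by (rule cob_add[OF cob_mult_right[OF cob_Dr_zz_y3] cob_mult_left[OF Suc.IH hom_y(3)]]) simp_all
qed

lemma ZY: "Zp j \<odot> Yp k - Yp k \<odot> Zp j \<in> (coboundaries :: 'a::comm_ring_1 fa set)"
proof (induction j)
  case 0 then show ?case by simp
next
  case (Suc j)
  have e: "Zp (Suc j) \<odot> Yp k - Yp k \<odot> Zp (Suc j)
      = zz \<odot> (Zp j \<odot> Yp k - Yp k \<odot> Zp j) + (zz \<odot> Yp k - Yp k \<odot> (zz :: 'a fa)) \<odot> Zp j"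
    by (simp add: fa_pow_Suc fa_mult_diff_left fa_mult_diff_right fa_mult_assoc)
  show ?case unfolding e
    by (rule cob_add[OF cob_mult_left[OF Suc.IH hom_zz] cob_mult_right[OF ZY1]]) (simp_all add: Dr_zz)
qed

lemma Tmul: "T (i + k) (j + l) - T i j \<odot> T k l \<in> (coboundaries :: 'a::comm_ring_1 fa set)"
proof -
  have e: "T (i + k) (j + l) - T i j \<odot> T k l
      = Yp i \<odot> (- (Zp j \<odot> Yp k - Yp k \<odot> Zp j) \<odot> (Zp l :: 'a fa))"
    by (simp add: T_def pow_add fa_mult_diff_left fa_mult_diff_right fa_mult_assoc fa_mult_uminus_left fa_mult_uminus_right)
  show ?thesis unfolding e
    by (rule cob_mult_left[OF cob_mult_right[OF cob_uminus[OF ZY]] hom_Yp]) simp_all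
qed

lemma smul_smul: "fa_smul c (fa_smul d X) = fa_smul (c * d) (X :: 'a::comm_ring_1 fa)"
  by (simp add: fa_smul_def mult.assoc)
lemma smul_diff: "fa_smul c X - fa_smul c Y = fa_smul c (X - Y :: 'a::comm_ring_1 fa)"
  by (rule ext) (simp add: fa_smul_def algebra_simps)

lemma part2_mono: "ev (monom (monom c i) j * monom (monom d k) l) - ev (monom (monom c i) j) \<odot> ev (monom (monom d k) l)
   \<in> (coboundaries :: 'a::comm_ring_1 fa set)"
proof -
  have "ev (monom (monom c i) j * monom (monom d k) l) - ev (monom (monom c i) j) \<odot> ev (monom (monom d k) l)
     = fa_smul (c * d) (T (i + k) (j + l) - T i j \<odot> (T k l :: 'a fa))"
    by (simp add: mult_monom ev_monom fa_mult_smul_left fa_mult_smul_right smul_smul smul_diff mult.commute)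
  then show ?thesis using cob_smul[OF Tmul] by simp
qed

lemma part2: "ev (P * Q) - ev P \<odot> ev Q \<in> (coboundaries :: 'a::comm_ring_1 fa set)"
proof -
  have mq: "ev (monom (monom c i) j * Q) - ev (monom (monom c i) j) \<odot> ev Q \<in> (coboundaries :: 'a fa set)"
    for c :: 'a and i j
  proof (rule pp_induct[where \<Phi>="\<lambda>Q. ev (monom (monom c i) j * Q) - ev (monom (monom c i) j) \<odot> ev Q \<in> (coboundaries :: 'a fa set)"])
    show "ev (monom (monom c i) j * 0) - ev (monom (monom c i) j) \<odot> ev 0 \<in> (coboundaries :: 'a fa set)" by simp
  next
    fix Q1 Q2 :: "'a poly poly"
    assume a: "ev (monom (monom c i) j * Q1) - ev (monom (monom c i) j) \<odot> ev Q1 \<in> coboundaries"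
      "ev (monom (monom c i) j * Q2) - ev (monom (monom c i) j) \<odot> ev Q2 \<in> coboundaries"
    have "ev (monom (monom c i) j * (Q1 + Q2)) - ev (monom (monom c i) j) \<odot> ev (Q1 + Q2)
      = (ev (monom (monom c i) j * Q1) - ev (monom (monom c i) j) \<odot> ev Q1)
        + (ev (monom (monom c i) j * Q2) - ev (monom (monom c i) j) \<odot> ev Q2)"
      by (simp add: distrib_left ev_add fa_mult_add_right)
    then show "ev (monom (monom c i) j * (Q1 + Q2)) - ev (monom (monom c i) j) \<odot> ev (Q1 + Q2) \<in> coboundaries"
      using cob_add[OF a] by simp
  next
    fix d :: 'a and k l
    show "ev (monom (monom c i) j * monom (monom d k) l) - ev (monom (monom c i) j) \<odot> ev (monom (monom d k) l) \<in> coboundaries"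
      by (rule part2_mono)
  qed
  show ?thesis
  proof (rule pp_induct[where \<Phi>="\<lambda>P. ev (P * Q) - ev P \<odot> ev Q \<in> (coboundaries :: 'a fa set)"])
    show "ev (0 * Q) - ev 0 \<odot> ev Q \<in> (coboundaries :: 'a fa set)" by simp
  next
    fix P1 P2 :: "'a poly poly"
    assume a: "ev (P1 * Q) - ev P1 \<odot> ev Q \<in> coboundaries" "ev (P2 * Q) - ev P2 \<odot> ev Q \<in> coboundaries"
    have "ev ((P1 + P2) * Q) - ev (P1 + P2) \<odot> ev Q
      = (ev (P1 * Q) - ev P1 \<odot> ev Q) + (ev (P2 * Q) - ev P2 \<odot> ev Q)"
      by (simp add: distrib_right ev_add fa_mult_add_left)
    then show "ev ((P1 + P2) * Q) - ev (P1 + P2) \<odot> ev Q \<in> coboundaries"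
      using cob_add[OF a] by simp
  next
    fix c :: 'a and i j
    show "ev (monom (monom c i) j * Q) - ev (monom (monom c i) j) \<odot> ev Q \<in> coboundaries"
      by (rule mq)
  qed
qed



definition hh :: "'a::comm_ring_1 fa \<Rightarrow> 'a fa" where
  "hh f = (\<lambda>v. case v of Y1 # r \<Rightarrow> f (Y3 # Y3 # r) | Y2 # r \<Rightarrow> f (Y3 # Y1 # r) | _ \<Rightarrow> 0)"

definition strip :: "'a::comm_ring_1 fa \<Rightarrow> 'a fa" where
  "strip f = (\<lambda>r. f (Y3 # Y2 # r))"

definition pp :: "'a::comm_ring_1 fa \<Rightarrow> 'a fa" where
  "pp f = fa_smul (f []) (word []) + fa_smul (f [Y3]) y3 + zz \<odot> strip f"

lemma zz_mult_Nil[simp]: "(zz \<odot> R) [] = 0"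
  by (simp add: zz_eq fa_mult_add_left fa_mult_assoc y_defs)
lemma zz_mult_single[simp]: "(zz \<odot> R) [a] = 0"
  by (simp add: zz_eq fa_mult_add_left fa_mult_assoc y_defs)
lemma zz_mult_CC[simp]: "(zz \<odot> R) (a # b # w) =
   (if (a = Y1 \<and> b = Y1) \<or> (a = Y2 \<and> b = Y3) \<or> (a = Y3 \<and> b = Y2) then R w else 0)"
  by (cases a; cases b) (simp_all add: zz_eq fa_mult_add_left fa_mult_assoc y_defs)

lemma homotopy: "Dr (hh f) v + hh (Dr f) v = f v - pp f v"
proof (cases v rule: cases_list012)
  case Nil then show ?thesis by (simp add: hh_def pp_def fa_smul_def word_apply y_defs)
next
  case (Single a) then show ?thesis
    by (cases a) (simp_all add: hh_def pp_def fa_smul_def word_apply y_defs mt_def)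
next
  case (CC a b w) then show ?thesis
    by (cases a; cases b) (simp_all add: hh_def pp_def fa_smul_def word_apply y_defs mt_def strip_def)
qed

lemma hh_zero[simp]: "hh 0 = 0"
  by (rule ext) (simp add: hh_def split: list.split gen.split)

lemma hh_vanish: "\<forall>w. n \<le> length w \<longrightarrow> f w = 0 \<Longrightarrow> n \<le> length v \<Longrightarrow> hh f v = 0"
  by (auto simp: hh_def split: list.split gen.split)

lemma zz_cancel: "zz \<odot> X = 0 \<Longrightarrow> X = 0"
proof (rule ext)
  fix w assume "zz \<odot> X = 0"
  then have "(zz \<odot> X) (Y3 # Y2 # w) = 0" by simp
  then show "X w = 0 w" by simp
qed

lemma T00: "T 0 0 = word []" by (simp add: T_def)
lemma T10: "T (Suc 0) 0 = y3" by (simp add: T_def fa_pow_Suc)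
lemma T01: "T 0 1 = zz" by (simp add: T_def fa_pow_Suc)

lemma part3_ind:
  "\<forall>c :: 'a::comm_ring_1 fa. fin c \<and> Dr c = 0 \<and> (\<forall>w. n \<le> length w \<longrightarrow> c w = 0)
      \<longrightarrow> (\<exists>P. c - ev P \<in> coboundaries)"
proof (induction n rule: less_induct)
  case (less n)
  show ?case
  proof (intro allI impI)
    fix c :: "'a fa"
    assume asm: "fin c \<and> Dr c = 0 \<and> (\<forall>w. n \<le> length w \<longrightarrow> c w = 0)"
    then have fc: "fin c" and dc: "Dr c = 0" and bc: "\<forall>w. n \<le> length w \<longrightarrow> c w = 0" by auto
    show "\<exists>P. c - ev P \<in> coboundaries"
    proof (cases "n = 0")
      case True
      then have "c = 0" using bc by (auto simp: zero_fun_def)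
      then show ?thesis by (intro exI[of _ 0]) simp
    next
      case False
      let ?R = "strip c"
      have bR: "\<forall>w. n - 2 \<le> length w \<longrightarrow> ?R w = 0" using bc by (simp add: strip_def)
      then have fR: "fin ?R" unfolding fin_def by blast
      have fh: "fin (hh c)" unfolding fin_def using hh_vanish[OF bc] by blast
      have ceq: "c = pp c + Dr (hh c)"
      proof (rule ext)
        fix v show "c v = (pp c + Dr (hh c)) v" using homotopy[of c v] dc by simp
      qed
      have "Dr (pp c) = Dr c - Dr (Dr (hh c))"
        using arg_cong[OF ceq, of Dr] by (simp add: Dr_add)
      then have "Dr (pp c) = 0" using dc DD[OF fh] by simp
      moreover have "Dr (pp c) = zz \<odot> Dr ?R"
        unfolding pp_def by (simp add: Dr_add Dr_smul LEIB Dr_zz sg_zz y_defs[symmetric])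
      ultimately have dR: "Dr ?R = 0" using zz_cancel by metis
      have lt: "n - 2 < n" using False by simp
      have "\<exists>P. ?R - ev P \<in> coboundaries" using less.IH[OF lt] fR dR bR by blast
      then obtain PR where PR: "?R - ev PR \<in> coboundaries" by blast
      let ?B = "monom (monom (1::'a) 0) 1"
      let ?P = "monom (monom (c []) 0) 0 + monom (monom (c [Y3]) 1) 0 + ?B * PR"
      have evB: "ev ?B = zz" unfolding ev_monom T01 by (simp add: fa_smul_def)
      have "c - ev ?P = zz \<odot> (?R - ev PR) - (ev (?B * PR) - ev ?B \<odot> ev PR) + Dr (hh c)"
        apply (subst ceq)
        using evB apply (simp add: ev_add ev_monom T00 T10 pp_def fa_mult_diff_right)
        done
      also have "\<dots> \<in> coboundaries"
        by (intro cob_add cob_diff cob_mult_left[OF PR hom_zz] part2 cob_Dr fh) (simp add: Dr_zz)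
      finally show ?thesis by blast
    qed
  qed
qed

lemma part3: "c \<in> (cocycles :: 'a::comm_ring_1 fa set) \<Longrightarrow> \<exists>P. fa_diff c (ev P) \<in> coboundaries"
proof -
  assume "c \<in> cocycles"
  then have fc: "fin c" and dc: "Dr c = 0"
    by (auto simp: cocycles_def fin_carrier dfa_eq fa_zero_eq)
  then obtain n where "\<forall>w. n \<le> length w \<longrightarrow> c w = 0" by (auto simp: fin_def)
  then show ?thesis using part3_ind[of n] fc dc by (auto simp: fa_diff_eq)
qed



abbreviation W :: "nat \<Rightarrow> nat \<Rightarrow> gen list" where
  "W p q \<equiv> replicate p Y1 @ Y3 # replicate q Y1"

lemma Dr_rep: "Dr g (replicate n Y1) = 0"
proof (induction n arbitrary: g)
  case 0 then show ?case by simp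
next
  case (Suc n)
  show ?case
  proof (cases n)
    case 0 then show ?thesis by simp
  next
    case (Suc m)
    have "Dr g (replicate (Suc n) Y1) = - Dr (\<lambda>u. g (Y1 # u)) (replicate n Y1)"
      by (simp add: Suc mt_def)
    then show ?thesis using Suc.IH by simp
  qed
qed

lemma Dr_W: "Dr g (W p q) =
   (if 1 \<le> p then (-1) ^ (p - 1) * g (replicate (p - 1) Y1 @ Y2 # replicate q Y1) else 0)
 + (if 1 \<le> q then (-1) ^ p * g (replicate p Y1 @ Y2 # replicate (q - 1) Y1) else 0)"
proof (induction p arbitrary: g)
  case 0
  show ?case
  proof (cases q)
    case 0 then show ?thesis by simp
  next
    case (Suc q')
    have "Dr (\<lambda>u. g (Y3 # u)) (Y1 # replicate q' Y1) = 0"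
      using Dr_rep[of "\<lambda>u. g (Y3 # u)" "Suc q'"] by simp
    then show ?thesis by (simp add: Suc mt_def)
  qed
next
  case (Suc p)
  show ?case
  proof (cases p)
    case 0
    have "Dr g (W (Suc p) q) = g (Y2 # replicate q Y1) - Dr (\<lambda>u. g (Y1 # u)) (W 0 q)"
      by (simp add: 0 mt_def)
    then show ?thesis using Suc.IH[of "\<lambda>u. g (Y1 # u)"] by (simp add: 0)
  next
    case (Suc p')
    have "Dr g (W (Suc p) q) = - Dr (\<lambda>u. g (Y1 # u)) (W p q)"
      by (simp add: Suc mt_def)
    then show ?thesis using Suc.IH[of "\<lambda>u. g (Y1 # u)"] by (simp add: Suc replicate_app_Cons_same)
  qed
qed

definition psi :: "nat \<Rightarrow> 'a::comm_ring_1 fa \<Rightarrow> 'a" where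
  "psi n f = (\<Sum>p\<le>n. (-1) ^ p * f (W p (n - p)))"

lemma psi_Dr: "psi n (Dr g) = 0"
proof (cases n)
  case 0 then show ?thesis by (simp add: psi_def)
next
  case (Suc m)
  define G where "G k = g (replicate k Y1 @ Y2 # replicate (m - k) Y1)" for k
  have t: "(-1) ^ p * Dr g (W p (n - p)) = (if 1 \<le> p then - G (p - 1) else 0) + (if p < n then G p else 0)"
    if "p \<le> n" for p
  proof -
    have a: "(-1) ^ p * ((-1) ^ (p - Suc 0) * x) = - x" if "Suc 0 \<le> p" for x :: 'a
    proof -
      have "(-1::'a) ^ p = - ((-1) ^ (p - Suc 0))" using that by (cases p) auto
      then show ?thesis by simp
    qed
    show ?thesis using that
      by (auto simp: Dr_W G_def a Suc distrib_left Suc_diff_le)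
  qed
  have "psi n (Dr g) = (\<Sum>p\<le>n. (if 1 \<le> p then - G (p - 1) else 0) + (if p < n then G p else 0))"
    unfolding psi_def by (rule sum.cong) (simp_all add: t)
  also have "\<dots> = (\<Sum>p\<le>m. - G p + (if Suc p < n then G (Suc p) else 0)) + G 0"
    unfolding Suc sum.atMost_Suc_shift by simp
  also have "\<dots> = - (\<Sum>p\<le>m. G p) + ((\<Sum>p<m. G (Suc p)) + G 0)"
  proof -
    have "(\<Sum>p\<le>m. (if Suc p < n then G (Suc p) else 0)) = (\<Sum>p<m. G (Suc p))"
      by (simp add: Suc sum.If_cases lessThan_def atMost_def) (rule sum.cong; auto)
    then show ?thesis by (simp add: sum_subtractf)
  qed
  also have "\<dots> = 0"
  proof -
    have "(\<Sum>p\<le>m. G p) = (\<Sum>p<Suc m. G p)" by (simp add: lessThan_Suc_atMost)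
    also have "\<dots> = G 0 + (\<Sum>p<m. G (Suc p))" by (rule sum.lessThan_Suc_shift)
    finally show ?thesis by simp
  qed
  finally show ?thesis .
qed

lemma y3_mult_rep: "(y3 \<odot> X) (replicate n Y1) = 0"
  by (cases n) (simp_all add: y_defs)

lemma y3_mult_W: "(y3 \<odot> X) (W p q) = (if p = 0 then X (replicate q Y1) else 0)"
  by (cases p) (simp_all add: y_defs)

lemma Zp_rep: "Zp k (replicate (2 * j) Y1) = (if k = j then 1 else (0::'a::comm_ring_1))"
proof (induction k arbitrary: j)
  case 0 then show ?case by (simp add: word_apply)
next
  case (Suc k)
  show ?case
  proof (cases j)
    case 0 then show ?thesis by (simp add: fa_pow_Suc)
  next
    case (Suc j')
    have "replicate (2 * j) Y1 = Y1 # Y1 # replicate (2 * j') Y1" by (simp add: Suc)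
    then show ?thesis using Suc.IH[of j'] by (simp add: fa_pow_Suc Suc)
  qed
qed

lemma Zp_noY2: "Y2 \<notin> set v \<Longrightarrow> Y3 \<in> set v \<Longrightarrow> Zp k v = (0::'a::comm_ring_1)"
proof (induction k arbitrary: v)
  case 0 then show ?case by (auto simp: word_apply)
next
  case (Suc k)
  show ?case
  proof (cases v rule: cases_list012)
    case (CC a b w)
    then show ?thesis using Suc by (cases a; cases b) (auto simp: fa_pow_Suc)
  qed (simp_all add: fa_pow_Suc)
qed

lemma T_rep: "T i k (replicate (2 * j) Y1) = (if i = 0 \<and> k = j then 1 else (0::'a::comm_ring_1))"
proof (cases i)
  case 0 then show ?thesis by (simp add: T_def Zp_rep)
next
  case (Suc i') then show ?thesis by (simp add: T_def fa_pow_Suc fa_mult_assoc y3_mult_rep)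
qed

lemma T_W: "T i k (W p q) = (if p = 0 \<and> i = 1 then Zp k (replicate q Y1) else (0::'a::comm_ring_1))"
proof (cases i)
  case 0 then show ?thesis by (simp add: T_def Zp_noY2)
next
  case (Suc i')
  show ?thesis
  proof (cases i')
    case 0 then show ?thesis using Suc by (simp add: T_def fa_pow_Suc fa_mult_assoc y3_mult_W)
  next
    case (Suc i'') then show ?thesis using \<open>i = Suc i'\<close>
      by (simp add: T_def fa_pow_Suc fa_mult_assoc y3_mult_W y3_mult_rep)
  qed
qed

lemma psi_T: "psi (2 * j) (T i k) = (if i = 1 \<and> k = j then 1 else (0::'a::comm_ring_1))"
proof -
  have "psi (2 * j) (T i k :: 'a fa) = (\<Sum>p\<le>2 * j. if p = 0 then (if i = 1 then Zp k (replicate (2 * j) Y1) else 0) else 0)"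
    unfolding psi_def by (rule sum.cong) (auto simp: T_W)
  also have "\<dots> = (if i = 1 then Zp k (replicate (2 * j) Y1) else 0)" by (subst sum.delta) auto
  finally show ?thesis by (simp add: Zp_rep)
qed

lemma psi_add: "psi n (f + g) = psi n f + psi n g"
  by (simp add: psi_def sum.distrib algebra_simps)
lemma psi_smul: "psi n (fa_smul c f) = c * psi n f"
  by (simp add: psi_def fa_smul_def sum_distrib_left algebra_simps)

lemma ev_phi: "ev P (replicate (2 * j) Y1) = coeff (coeff P j) 0"
proof (rule pp_induct[where \<Phi>="\<lambda>P. ev P (replicate (2 * j) Y1) = coeff (coeff P j) 0"])
  show "ev 0 (replicate (2 * j) Y1) = coeff (coeff (0 :: 'a poly poly) j) 0" by simp
next
  fix P Q :: "'a poly poly"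
  assume "ev P (replicate (2 * j) Y1) = coeff (coeff P j) 0" "ev Q (replicate (2 * j) Y1) = coeff (coeff Q j) 0"
  then show "ev (P + Q) (replicate (2 * j) Y1) = coeff (coeff (P + Q) j) 0" by (simp add: ev_add)
next
  fix c :: 'a and i k
  show "ev (monom (monom c i) k) (replicate (2 * j) Y1) = coeff (coeff (monom (monom c i) k) j) 0"
    by (simp add: ev_monom fa_smul_def T_rep coeff_monom)
qed

lemma ev_psi: "psi (2 * j) (ev P) = coeff (coeff P j) 1"
proof (rule pp_induct[where \<Phi>="\<lambda>P. psi (2 * j) (ev P) = coeff (coeff P j) 1"])
  show "psi (2 * j) (ev 0) = coeff (coeff (0 :: 'a poly poly) j) 1" by (simp add: psi_def)
next
  fix P Q :: "'a poly poly"
  assume "psi (2 * j) (ev P) = coeff (coeff P j) 1" "psi (2 * j) (ev Q) = coeff (coeff Q j) 1"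
  then show "psi (2 * j) (ev (P + Q)) = coeff (coeff (P + Q) j) 1" by (simp add: ev_add psi_add)
next
  fix c :: 'a and i k
  show "psi (2 * j) (ev (monom (monom c i) k)) = coeff (coeff (monom (monom c i) k) j) 1"
    by (simp add: ev_monom psi_smul psi_T coeff_monom)
qed

lemma part4_fwd: "ev P \<in> (coboundaries :: 'a::comm_ring_1 fa set) \<Longrightarrow> coeff (coeff P j) 0 = 0 \<and> coeff (coeff P j) 1 = 0"
proof -
  assume "ev P \<in> coboundaries"
  then obtain g where g: "ev P = Dr g" unfolding cob_iff by blast
  have "coeff (coeff P j) 0 = Dr g (replicate (2 * j) Y1)" using ev_phi[of P j] g by simp
  moreover have "coeff (coeff P j) 1 = psi (2 * j) (Dr g)" using ev_psi[of j P] g by simp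
  ultimately show ?thesis by (simp add: Dr_rep psi_Dr)
qed

lemma X2_eq: "[:[:0, 0, 1:]:] = monom (monom (1::'a::comm_ring_1) 2) 0"
  by (simp add: numeral_2_eq_2 monom_Suc monom_0)

lemma ev_X2: "ev ([:[:0, 0, 1:]:] * Q) = y3 \<odot> (y3 \<odot> ev (Q :: 'a::comm_ring_1 poly poly))"
proof (rule pp_induct[where \<Phi>="\<lambda>Q. ev ([:[:0, 0, 1:]:] * Q) = y3 \<odot> (y3 \<odot> ev (Q :: 'a poly poly))"])
  show "ev ([:[:0, 0, 1:]:] * 0) = y3 \<odot> (y3 \<odot> ev (0 :: 'a poly poly))" by simp
next
  fix P Q :: "'a poly poly"
  assume "ev ([:[:0, 0, 1:]:] * P) = y3 \<odot> (y3 \<odot> ev P)" "ev ([:[:0, 0, 1:]:] * Q) = y3 \<odot> (y3 \<odot> ev Q)"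
  then show "ev ([:[:0, 0, 1:]:] * (P + Q)) = y3 \<odot> (y3 \<odot> ev (P + Q))"
    by (simp add: distrib_left ev_add fa_mult_add_right)
next
  fix c :: 'a and i k
  have "T (i + 2) k = y3 \<odot> (y3 \<odot> (T i k :: 'a fa))"
    by (simp add: T_def numeral_2_eq_2 fa_pow_Suc fa_mult_assoc)
  then show "ev ([:[:0, 0, 1:]:] * monom (monom c i) k) = y3 \<odot> (y3 \<odot> ev (monom (monom c i) k))"
    unfolding X2_eq mult_monom by (simp add: ev_monom fa_mult_smul_right add.commute)
qed

lemma part4_bwd: "ev ([:[:0, 0, 1:]:] * Q) \<in> (coboundaries :: 'a::comm_ring_1 fa set)"
proof -
  have "Dr (y1 \<odot> ev Q) = y3 \<odot> (y3 \<odot> ev (Q :: 'a poly poly))"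
    using part1[of Q] by (simp add: LEIB Dr_y1 fa_mult_assoc)
  moreover have "fin (y1 \<odot> ev Q)" using part1[of Q] by simp
  ultimately show ?thesis unfolding ev_X2 using cob_Dr by metis
qed



lemma X2_dvd: "coeff r 0 = 0 \<Longrightarrow> coeff r 1 = 0 \<Longrightarrow> [:0, 0, 1:] dvd (r :: 'a::comm_ring_1 poly)"
proof -
  assume a: "coeff r 0 = 0" "coeff r 1 = 0"
  obtain x r' where r: "r = pCons x r'" by (cases r) 
  obtain y s where r': "r' = pCons y s" by (cases r')
  have e: "r = [:0, 0, 1:] * s" using a by (simp add: r r')
  show ?thesis unfolding e by (rule dvd_triv_left)
qed

theorem proposition3p1:
  fixes dummy :: "'a::field_char_0"
  assumes alg_closed: "\<forall>p :: 'a poly. degree p > 0 \<longrightarrow> (\<exists>x. poly p x = 0)"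
  shows "(\<forall>P :: 'a poly poly. ev P \<in> cocycles)
       \<and> (\<forall>P Q :: 'a poly poly. fa_diff (ev (P * Q)) (ev P \<odot> ev Q) \<in> coboundaries)
       \<and> (\<forall>c \<in> (cocycles :: 'a fa set). \<exists>P :: 'a poly poly. fa_diff c (ev P) \<in> coboundaries)
       \<and> (\<forall>P :: 'a poly poly. ev P \<in> coboundaries \<longleftrightarrow> [:[:0, 0, 1:]:] dvd P)"
proof (intro conjI allI ballI)
  fix P :: "'a poly poly"
  show "ev P \<in> cocycles"
    using part1[of P] by (simp add: cocycles_def fin_carrier dfa_eq fa_zero_eq)
next
  fix P Q :: "'a poly poly"
  show "fa_diff (ev (P * Q)) (ev P \<odot> ev Q) \<in> coboundaries"
    using part2[of P Q] by (simp add: fa_diff_eq)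
next
  fix c :: "'a fa"
  assume "c \<in> cocycles"
  then show "\<exists>P :: 'a poly poly. fa_diff c (ev P) \<in> coboundaries" by (rule part3)
next
  fix P :: "'a poly poly"
  show "ev P \<in> coboundaries \<longleftrightarrow> [:[:0, 0, 1:]:] dvd P"
  proof
    assume "ev P \<in> coboundaries"
    then have "\<forall>j. [:0, 0, 1:] dvd coeff P j"
      using part4_fwd X2_dvd by blast
    then show "[:[:0, 0, 1:]:] dvd P" by (simp add: const_poly_dvd_iff)
  next
    assume "[:[:0, 0, 1:]:] dvd P"
    then obtain Q where "P = [:[:0, 0, 1:]:] * Q" by (elim dvdE)
    then show "ev P \<in> coboundaries" using part4_bwd by simp
  qed
qed


end
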